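(* Let $r,r'\sim\mathcal N(\mu,\Sigma)$ be i.i.d. Gaussian random vectors in $\mathbb R^{|r|}$ and let $x=f(r)\in\{1,\dots,|r|\}$ for an arbitrary (measurable) function $f$. For each index $z$ let $\sigma_{\eta_z}:=\sqrt{\Sigma_{zz}}$ denote the standard deviation of $r_z$. Then $$\mathbb E[|r_x-\mu_x|]\le\sqrt{\mathbb E[\sigma_{\eta_x}^2]\cdot(2\log(2|r|)+2)}\quad\text{and}\quad \mathbb E[|r_x-r'_x|]\le\beta\sqrt{\mathbb E[\sigma_{\eta_x}^2]},$$ where $\beta:=1+\sqrt{2\log(2|r|)+2}$.
   Context: $|r|$ denotes the dimension (number of entries) of the vector $r$; $\sigma_{\eta_x}$ is the standard deviation of the coordinate indexed by the random index $x$. *)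

theory Defs
  imports "HOL-Probability.Probability"
begin

text \<open>This covers degenerate (singular) covariance matrices.\<close>
definition gaussian_vec ::
  "'a measure \<Rightarrow> ('a \<Rightarrow> real^'n) \<Rightarrow> real^'n \<Rightarrow> real^'n^'n \<Rightarrow> bool" where
  "gaussian_vec M r \<mu> \<Sigma> \<longleftrightarrow>
     r \<in> borel_measurable M \<and>
     (\<forall>i j. \<Sigma> $ i $ j = \<Sigma> $ j $ i) \<and>
     (\<forall>a. 0 \<le> a \<bullet> (\<Sigma> *v a)) \<and>
     (\<forall>t. (LINT \<omega>|M. cis (t \<bullet> r \<omega>)) =
          cis (t \<bullet> \<mu>) * complex_of_real (exp (- (t \<bullet> (\<Sigma> *v t)) / 2)))"

end

theory Submission
  imports Defs
begin


lemma mv_axis: "((\<Sigma>::real^'n^'n) *v axis i u) $ i = \<Sigma> $ i $ i * u"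
  by (simp add: matrix_vector_mult_def axis_def if_distrib cong: if_cong)

lemma axis_quad: "axis i u \<bullet> ((\<Sigma>::real^'n^'n) *v axis i u) = u * u * \<Sigma> $ i $ i"
  by (simp add: inner_axis' mv_axis)

lemma meas_nth[measurable (raw)]: "r \<in> borel_measurable M \<Longrightarrow> (\<lambda>x. (r x :: real^'n) $ i) \<in> borel_measurable M"
  by (rule measurable_compose[OF _ borel_measurable_nth])

lemma gauss_diag_nonneg:
  assumes "gaussian_vec M r \<mu> \<Sigma>" shows "0 \<le> \<Sigma> $ i $ i"
proof -
  have "0 \<le> axis i 1 \<bullet> (\<Sigma> *v axis i 1)" using assms unfolding gaussian_vec_def by blast
  then show ?thesis by (simp add: axis_quad)
qed

lemma gauss_coord_distr:
  assumes P: "prob_space M" and G: "gaussian_vec M r \<mu> \<Sigma>"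
  shows "distr M borel (\<lambda>\<omega>. r \<omega> $ i - \<mu> $ i)
         = distr std_normal_distribution borel (\<lambda>x. sqrt (\<Sigma>$i$i) * x)"
proof (rule Levy_uniqueness)
  interpret prob_space M by fact
  have rm: "r \<in> borel_measurable M" using G unfolding gaussian_vec_def by blast
  have dm: "(\<lambda>\<omega>. r \<omega> $ i - \<mu> $ i) \<in> borel_measurable M" using rm by measurable
  show "real_distribution (distr M borel (\<lambda>\<omega>. r \<omega> $ i - \<mu> $ i))"
    using dm by (intro real_distribution_distr) auto
  show "real_distribution (distr std_normal_distribution borel (\<lambda>x. sqrt (\<Sigma>$i$i) * x))"
    using real_dist_normal_dist by (intro prob_space.real_distribution_distr) (auto simp: real_distribution_def)
  have s0: "0 \<le> \<Sigma> $ i $ i" using gauss_diag_nonneg[OF G] .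
  show "char (distr M borel (\<lambda>\<omega>. r \<omega> $ i - \<mu> $ i)) = char (distr std_normal_distribution borel (\<lambda>x. sqrt (\<Sigma>$i$i) * x))"
  proof
    fix u :: real
    have cf: "(LINT \<omega>|M. cis (axis i u \<bullet> r \<omega>)) =
          cis (axis i u \<bullet> \<mu>) * complex_of_real (exp (- (axis i u \<bullet> (\<Sigma> *v axis i u)) / 2))"
      using G unfolding gaussian_vec_def by blast
    have "char (distr M borel (\<lambda>\<omega>. r \<omega> $ i - \<mu> $ i)) u = (CLINT \<omega>|M. iexp (u * (r \<omega> $ i - \<mu> $ i)))"
      unfolding char_def using dm by (subst integral_distr) auto
    also have "\<dots> = (CLINT \<omega>|M. cis (axis i u \<bullet> r \<omega>) * cis (- (u * \<mu> $ i)))"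
    proof (rule Bochner_Integration.integral_cong)
      fix \<omega> have e: "\<And>x. iexp x = cis x" by (simp add: cis_conv_exp)
      show "iexp (u * (r \<omega> $ i - \<mu> $ i)) = cis (axis i u \<bullet> r \<omega>) * cis (- (u * \<mu> $ i))"
        unfolding e by (simp add: cis_mult inner_axis' algebra_simps)
    qed simp
    also have "\<dots> = (CLINT \<omega>|M. cis (axis i u \<bullet> r \<omega>)) * cis (- (u * \<mu> $ i))"
      by simp
    also have "\<dots> = cis (u * \<mu> $ i) * complex_of_real (exp (- (u * u * \<Sigma> $ i $ i) / 2)) * cis (- (u * \<mu> $ i))"
      unfolding cf axis_quad by (simp add: inner_axis')
    also have "\<dots> = complex_of_real (exp (- ((sqrt (\<Sigma>$i$i) * u)^2) / 2))"
    proof -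
      have sq: "(sqrt (\<Sigma>$i$i) * u)^2 = u * u * \<Sigma> $ i $ i" using s0 by (simp add: power_mult_distrib power2_eq_square)
      have "cis (u * \<mu> $ i) * complex_of_real (exp (- (u * u * \<Sigma> $ i $ i) / 2)) * cis (- (u * \<mu> $ i))
          = complex_of_real (exp (- (u * u * \<Sigma> $ i $ i) / 2)) * (cis (u * \<mu> $ i) * cis (- (u * \<mu> $ i)))"
        by (simp only: ac_simps)
      then show ?thesis unfolding sq by (simp add: cis_mult)
    qed
    also have "\<dots> = char std_normal_distribution (sqrt (\<Sigma>$i$i) * u)"
      by (simp add: char_std_normal_distribution)
    also have "\<dots> = char (distr std_normal_distribution borel (\<lambda>x. sqrt (\<Sigma>$i$i) * x)) u"
    proof -
      have "char (distr std_normal_distribution borel (\<lambda>x. sqrt (\<Sigma>$i$i) * x)) u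
           = (CLINT x|std_normal_distribution. iexp (u * (sqrt (\<Sigma>$i$i) * x)))"
        unfolding char_def by (subst integral_distr) auto
      also have "\<dots> = char std_normal_distribution (sqrt (\<Sigma>$i$i) * u)"
        unfolding char_def by (simp only: mult.assoc mult.left_commute[of u])
      finally show ?thesis by (rule sym)
    qed
    finally show "char (distr M borel (\<lambda>\<omega>. r \<omega> $ i - \<mu> $ i)) u = char (distr std_normal_distribution borel (\<lambda>x. sqrt (\<Sigma>$i$i) * x)) u" .
  qed
qed



lemma dens_shift: "std_normal_density y * exp (s*y) = exp (s\<^sup>2/2) * normal_density s 1 y"
proof -
  have "- y\<^sup>2 / 2 + s * y = s\<^sup>2/2 + (- (y - s)\<^sup>2 / 2)" by (simp add: power2_eq_square field_simps)
  then have "exp (- y\<^sup>2 / 2) * exp (s * y) = exp (s\<^sup>2/2) * exp (- (y - s)\<^sup>2 / 2)"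
    by (simp add: exp_add[symmetric])
  then show ?thesis unfolding normal_density_def by simp
qed

lemma std_mgf:
  shows "integrable std_normal_distribution (\<lambda>y. exp (s*y))"
    and "(LINT y|std_normal_distribution. exp (s*y)) = exp (s\<^sup>2/2)"
proof -
  have "integrable lborel (\<lambda>y. std_normal_density y *\<^sub>R exp (s*y))"
    unfolding real_scaleR_def dens_shift by simp
  then show "integrable std_normal_distribution (\<lambda>y. exp (s*y))"
    by (subst integrable_density) auto
  have "(LINT y|std_normal_distribution. exp (s*y)) = (LINT y|lborel. std_normal_density y *\<^sub>R exp (s*y))"
    by (subst integral_density) auto
  also have "\<dots> = exp (s\<^sup>2/2)" unfolding real_scaleR_def dens_shift by simp
  finally show "(LINT y|std_normal_distribution. exp (s*y)) = exp (s\<^sup>2/2)" .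
qed

lemma tail_pos:
  fixes y t :: real assumes t: "1 \<le> t" and y: "0 \<le> y"
  shows "max 0 (y\<^sup>2 - t) \<le> 2 * exp (-t) * exp (sqrt t * y)"
proof (cases "y\<^sup>2 \<le> t")
  case True then show ?thesis by simp
next
  case False
  define s where "s = sqrt t"
  have s1: "1 \<le> s" using t by (simp add: s_def)
  have st: "s\<^sup>2 = t" using t by (simp add: s_def)
  have ys: "s \<le> y"
  proof (rule ccontr)
    assume "\<not> s \<le> y" then have "y\<^sup>2 \<le> s\<^sup>2" using y by (intro power_mono) auto
    then show False using False st by simp
  qed
  define z where "z = s * (y - s)"
  have z0: "0 \<le> z" using ys s1 by (simp add: z_def)
  have "y\<^sup>2 - t = (y - s)\<^sup>2 + 2 * s * (y - s)" using st by (simp add: power2_eq_square algebra_simps)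
  also have "\<dots> \<le> z\<^sup>2 + 2 * z"
  proof -
    have "(y - s)\<^sup>2 \<le> (s * (y - s))\<^sup>2"
    proof -
      have "1 \<le> s\<^sup>2" using s1 by (simp add: one_le_power)
      then have "1 * (y - s)\<^sup>2 \<le> s\<^sup>2 * (y - s)\<^sup>2" by (intro mult_right_mono) auto
      then show ?thesis by (simp add: power_mult_distrib)
    qed
    then show ?thesis by (simp add: z_def)
  qed
  also have "\<dots> \<le> 2 * (exp z - 1)" using exp_lower_Taylor_quadratic[OF z0] by simp
  also have "\<dots> \<le> 2 * exp z" by simp
  also have "exp z = exp (-t) * exp (s * y)" using st
    by (simp add: z_def exp_add[symmetric] algebra_simps power2_eq_square)
  finally show ?thesis using False by (simp add: s_def)
qed

lemma tail_pt:
  fixes y t :: real assumes t: "1 \<le> t"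
  shows "max 0 (y\<^sup>2 - t) \<le> 2 * exp (-t) * (exp (sqrt t * y) + exp (- (sqrt t * y)))"
proof (cases "0 \<le> y")
  case True
  have "max 0 (y\<^sup>2 - t) \<le> 2 * exp (-t) * exp (sqrt t * y)" by (rule tail_pos[OF t True])
  also have "\<dots> \<le> 2 * exp (-t) * (exp (sqrt t * y) + exp (- (sqrt t * y)))" by simp
  finally show ?thesis .
next
  case False
  have "max 0 ((-y)\<^sup>2 - t) \<le> 2 * exp (-t) * exp (sqrt t * (-y))" by (rule tail_pos[OF t]) (use False in simp)
  also have "\<dots> \<le> 2 * exp (-t) * (exp (sqrt t * y) + exp (- (sqrt t * y)))" by simp
  finally show ?thesis by simp
qed

lemma std_tail:
  fixes t :: real assumes t: "1 \<le> t"
  shows "integrable std_normal_distribution (\<lambda>y. max 0 (y\<^sup>2 - t))"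
    and "(LINT y|std_normal_distribution. max 0 (y\<^sup>2 - t)) \<le> 4 * exp (- t / 2)"
proof -
  let ?B = "\<lambda>y. 2 * exp (-t) * (exp (sqrt t * y) + exp ((- sqrt t) * y))"
  have iB: "integrable std_normal_distribution ?B"
    using std_mgf(1)[of "sqrt t"] std_mgf(1)[of "- sqrt t"] by auto
  have pt: "max 0 (y\<^sup>2 - t) \<le> ?B y" for y using tail_pt[OF t, of y] by simp
  show iT: "integrable std_normal_distribution (\<lambda>y. max 0 (y\<^sup>2 - t))"
  proof (rule Bochner_Integration.integrable_bound[OF iB])
    show "AE y in std_normal_distribution. norm (max 0 (y\<^sup>2 - t)) \<le> norm (?B y)"
    proof (rule AE_I2)
      fix y
      have "0 \<le> ?B y" by simp
      then show "norm (max 0 (y\<^sup>2 - t)) \<le> norm (?B y)" using pt[of y] by simp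
    qed
  qed simp
  have "(LINT y|std_normal_distribution. max 0 (y\<^sup>2 - t)) \<le> (LINT y|std_normal_distribution. ?B y)"
    by (rule integral_mono[OF iT iB pt])
  also have "\<dots> = 2 * exp (-t) * (exp (t/2) + exp (t/2))"
    using std_mgf[of "sqrt t"] std_mgf[of "- sqrt t"] t by simp
  also have "\<dots> = 4 * exp (- t / 2)" by (simp add: exp_add[symmetric])
  finally show "(LINT y|std_normal_distribution. max 0 (y\<^sup>2 - t)) \<le> 4 * exp (- t / 2)" .
qed

lemma amgm_bound:
  fixes L A K :: real
  assumes A: "0 \<le> A" and K: "0 \<le> K" and H: "\<And>a. 0 < a \<Longrightarrow> L \<le> (a * A + K / a) / 2"
  shows "L \<le> sqrt (A * K)"
proof (cases "A > 0 \<and> K > 0")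
  case True
  define a where "a = sqrt (K / A)"
  have a0: "0 < a" using True by (simp add: a_def)
  have "a * A = sqrt (A * K)" using True
    by (simp add: a_def real_sqrt_divide field_simps real_sqrt_mult)
  moreover have "K / a = sqrt (A * K)" using True
    by (simp add: a_def real_sqrt_divide field_simps real_sqrt_mult)
  ultimately show ?thesis using H[OF a0] by simp
next
  case False
  show ?thesis
  proof (rule ccontr)
    assume "\<not> L \<le> sqrt (A * K)"
    then have L: "L > 0" using False A K by auto
    show False
    proof (cases "A = 0")
      case True
      have a0: "0 < K / L + 1" using L K by (simp add: add_nonneg_pos)
      have 1: "L \<le> (K / (K / L + 1)) / 2" using H[OF a0] True by simp
      have 2: "K / (K / L + 1) = K * L / (K + L)" using L by (simp add: field_simps)
      have 3: "K * L / (K + L) \<le> L" using L K by (simp add: field_simps mult_left_mono)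
      from 1 2 have "L \<le> (K * L / (K + L)) / 2" by simp
      moreover have "K * L / (K + L) / 2 \<le> L / 2" using 3 by (rule divide_right_mono) simp
      ultimately have "L \<le> L / 2" by (rule order_trans)
      then show False using L by simp
    next
      case False
      then have A0: "A > 0" using A by simp
      then have K0: "K = 0" using \<open>\<not> (A > 0 \<and> K > 0)\<close> K by simp
      have "L \<le> ((L / A) * A) / 2" using H[of "L / A"] A0 L K0 by simp
      then show False using A0 L by simp
    qed
  qed
qed



lemma gtransfer:
  fixes \<phi> :: "real \<Rightarrow> real"
  assumes P: "prob_space M" and G: "gaussian_vec M r \<mu> \<Sigma>" and phi[measurable]: "\<phi> \<in> borel_measurable borel"
  shows "integrable M (\<lambda>\<omega>. \<phi> (r \<omega> $ i - \<mu> $ i)) \<longleftrightarrow> integrable std_normal_distribution (\<lambda>y. \<phi> (sqrt (\<Sigma>$i$i) * y))"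
    and "(LINT \<omega>|M. \<phi> (r \<omega> $ i - \<mu> $ i)) = (LINT y|std_normal_distribution. \<phi> (sqrt (\<Sigma>$i$i) * y))"
proof -
  have rm[measurable]: "r \<in> borel_measurable M" using G unfolding gaussian_vec_def by blast
  have dm: "(\<lambda>\<omega>. r \<omega> $ i - \<mu> $ i) \<in> borel_measurable M" by measurable
  have cm: "(\<lambda>y. sqrt (\<Sigma>$i$i) * y) \<in> measurable std_normal_distribution borel" by simp
  have "integrable M (\<lambda>\<omega>. \<phi> (r \<omega> $ i - \<mu> $ i)) \<longleftrightarrow> integrable (distr M borel (\<lambda>\<omega>. r \<omega> $ i - \<mu> $ i)) \<phi>"
    by (rule integrable_distr_eq[symmetric, OF dm phi])
  also have "\<dots> \<longleftrightarrow> integrable (distr std_normal_distribution borel (\<lambda>y. sqrt (\<Sigma>$i$i) * y)) \<phi>"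
    by (simp only: gauss_coord_distr[OF P G])
  also have "\<dots> \<longleftrightarrow> integrable std_normal_distribution (\<lambda>y. \<phi> (sqrt (\<Sigma>$i$i) * y))"
    by (rule integrable_distr_eq[OF cm phi])
  finally show "integrable M (\<lambda>\<omega>. \<phi> (r \<omega> $ i - \<mu> $ i)) \<longleftrightarrow> integrable std_normal_distribution (\<lambda>y. \<phi> (sqrt (\<Sigma>$i$i) * y))" .
  have "(LINT \<omega>|M. \<phi> (r \<omega> $ i - \<mu> $ i)) = integral\<^sup>L (distr M borel (\<lambda>\<omega>. r \<omega> $ i - \<mu> $ i)) \<phi>"
    by (rule integral_distr[symmetric, OF dm phi])
  also have "\<dots> = integral\<^sup>L (distr std_normal_distribution borel (\<lambda>y. sqrt (\<Sigma>$i$i) * y)) \<phi>"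
    by (simp only: gauss_coord_distr[OF P G])
  also have "\<dots> = (LINT y|std_normal_distribution. \<phi> (sqrt (\<Sigma>$i$i) * y))"
    by (rule integral_distr[OF cm phi])
  finally show "(LINT \<omega>|M. \<phi> (r \<omega> $ i - \<mu> $ i)) = (LINT y|std_normal_distribution. \<phi> (sqrt (\<Sigma>$i$i) * y))" .
qed

lemma std_abs_int: "integrable std_normal_distribution (\<lambda>y. \<bar>c * y\<bar>)"
proof -
  have "integrable std_normal_distribution (\<lambda>y. c * y^1)"
    using integrable_std_normal_distribution_moment[of 1] by simp
  then show ?thesis by (intro integrable_abs) simp
qed

lemma std_sq: "integrable std_normal_distribution (\<lambda>y. y\<^sup>2)" "(LINT y|std_normal_distribution. y\<^sup>2) = 1"
  using std_normal_distribution_even_moments[of 1] by (simp_all add: numeral_2_eq_2)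

lemma coord_abs:
  assumes P: "prob_space M" and G: "gaussian_vec M r \<mu> \<Sigma>"
  shows "integrable M (\<lambda>\<omega>. \<bar>r \<omega> $ i - \<mu> $ i\<bar>)"
    and "\<Sigma>$i$i = 0 \<Longrightarrow> (LINT \<omega>|M. \<bar>r \<omega> $ i - \<mu> $ i\<bar>) = 0"
proof -
  show "integrable M (\<lambda>\<omega>. \<bar>r \<omega> $ i - \<mu> $ i\<bar>)"
    using gtransfer(1)[OF P G, of "\<lambda>v. \<bar>v\<bar>" i] std_abs_int by simp
  assume "\<Sigma>$i$i = 0"
  then show "(LINT \<omega>|M. \<bar>r \<omega> $ i - \<mu> $ i\<bar>) = 0"
    using gtransfer(2)[OF P G, of "\<lambda>v. \<bar>v\<bar>" i] by simp
qed

lemma coord_sq: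
  assumes P: "prob_space M" and G: "gaussian_vec M r \<mu> \<Sigma>" and s: "0 < sqrt (\<Sigma>$i$i)"
  shows "integrable M (\<lambda>\<omega>. ((r \<omega> $ i - \<mu> $ i) / sqrt (\<Sigma>$i$i))\<^sup>2)"
    and "(LINT \<omega>|M. ((r \<omega> $ i - \<mu> $ i) / sqrt (\<Sigma>$i$i))\<^sup>2) = 1"
proof -
  have e: "(\<lambda>y. ((sqrt (\<Sigma>$i$i) * y) / sqrt (\<Sigma>$i$i))\<^sup>2) = (\<lambda>y. y\<^sup>2)" using s by simp
  show "integrable M (\<lambda>\<omega>. ((r \<omega> $ i - \<mu> $ i) / sqrt (\<Sigma>$i$i))\<^sup>2)"
    using gtransfer(1)[OF P G, of "\<lambda>v. (v / sqrt (\<Sigma>$i$i))\<^sup>2" i] std_sq(1) e by simp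
  show "(LINT \<omega>|M. ((r \<omega> $ i - \<mu> $ i) / sqrt (\<Sigma>$i$i))\<^sup>2) = 1"
    using gtransfer(2)[OF P G, of "\<lambda>v. (v / sqrt (\<Sigma>$i$i))\<^sup>2" i] std_sq(2) e by simp
qed

lemma coord_tail:
  assumes P: "prob_space M" and G: "gaussian_vec M r \<mu> \<Sigma>" and s: "0 < sqrt (\<Sigma>$i$i)" and t: "1 \<le> t"
  shows "integrable M (\<lambda>\<omega>. max 0 (((r \<omega> $ i - \<mu> $ i) / sqrt (\<Sigma>$i$i))\<^sup>2 - t))"
    and "(LINT \<omega>|M. max 0 (((r \<omega> $ i - \<mu> $ i) / sqrt (\<Sigma>$i$i))\<^sup>2 - t)) \<le> 4 * exp (- t / 2)"
proof -
  have e: "(\<lambda>y. max 0 (((sqrt (\<Sigma>$i$i) * y) / sqrt (\<Sigma>$i$i))\<^sup>2 - t)) = (\<lambda>y. max 0 (y\<^sup>2 - t))" using s by simp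
  show "integrable M (\<lambda>\<omega>. max 0 (((r \<omega> $ i - \<mu> $ i) / sqrt (\<Sigma>$i$i))\<^sup>2 - t))"
    using gtransfer(1)[OF P G, of "\<lambda>v. max 0 ((v / sqrt (\<Sigma>$i$i))\<^sup>2 - t)" i] std_tail(1)[OF t] e by simp
  show "(LINT \<omega>|M. max 0 (((r \<omega> $ i - \<mu> $ i) / sqrt (\<Sigma>$i$i))\<^sup>2 - t)) \<le> 4 * exp (- t / 2)"
    using gtransfer(2)[OF P G, of "\<lambda>v. max 0 ((v / sqrt (\<Sigma>$i$i))\<^sup>2 - t)" i] std_tail(2)[OF t] e by simp
qed



lemma ln2_ge: "1/2 \<le> ln (2::real)"
proof -
  have "ln (1/2::real) \<le> 1/2 - 1" by (rule ln_le_minus_one) simp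
  then show ?thesis by (simp add: ln_div)
qed

lemma amgm2: "0 < (a::real) \<Longrightarrow> x * y \<le> a / 2 * x\<^sup>2 + y\<^sup>2 / (2 * a)"
proof -
  assume a: "0 < a"
  have "0 \<le> (a * x - y)\<^sup>2" by simp
  then have "2 * a * (x * y) \<le> a * a * x\<^sup>2 + y\<^sup>2" by (simp add: power2_eq_square algebra_simps)
  moreover have "2 * a * (a / 2 * x\<^sup>2 + y\<^sup>2 / (2 * a)) = a * a * x\<^sup>2 + y\<^sup>2" using a by (simp add: field_simps)
  ultimately have "2 * a * (x * y) \<le> 2 * a * (a / 2 * x\<^sup>2 + y\<^sup>2 / (2 * a))" by simp
  then show ?thesis using a by (simp add: mult_le_cancel_left_pos)
qed

theorem lemmaD1:
  fixes M :: "'a measure"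
    and r r' :: "'a \<Rightarrow> real^'n"
    and \<mu> :: "real^'n" and \<Sigma> :: "real^'n^'n"
    and f :: "real^'n \<Rightarrow> 'n"
  assumes "prob_space M"
    and "gaussian_vec M r \<mu> \<Sigma>"
    and "gaussian_vec M r' \<mu> \<Sigma>"
    and "prob_space.indep_var M borel r borel r'"
    and "f \<in> measurable borel (count_space UNIV)"
  shows "(LINT \<omega>|M. \<bar>r \<omega> $ f (r \<omega>) - \<mu> $ f (r \<omega>)\<bar>)
           \<le> sqrt ((LINT \<omega>|M. (sqrt (\<Sigma> $ f (r \<omega>) $ f (r \<omega>)))\<^sup>2)
                   * (2 * ln (2 * real CARD('n)) + 2))
         \<and> (LINT \<omega>|M. \<bar>r \<omega> $ f (r \<omega>) - r' \<omega> $ f (r \<omega>)\<bar>)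
           \<le> (1 + sqrt (2 * ln (2 * real CARD('n)) + 2))
              * sqrt (LINT \<omega>|M. (sqrt (\<Sigma> $ f (r \<omega>) $ f (r \<omega>)))\<^sup>2)"
proof -
  interpret prob_space M by fact
  note P = \<open>prob_space M\<close> and G = \<open>gaussian_vec M r \<mu> \<Sigma>\<close> and G' = \<open>gaussian_vec M r' \<mu> \<Sigma>\<close>
  have rm[measurable]: "r \<in> borel_measurable M" using G unfolding gaussian_vec_def by blast
  have rm'[measurable]: "r' \<in> borel_measurable M" using G' unfolding gaussian_vec_def by blast
  have fm[measurable]: "f \<in> measurable borel (count_space UNIV)" by fact
  have xm: "(\<lambda>\<omega>. f (r \<omega>)) \<in> measurable M (count_space UNIV)" by measurable
  define n where "n = real CARD('n)"
  have n1: "1 \<le> n" by (simp add: n_def)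
  define t where "t = 2 * ln (2 * n)"
  have t1: "1 \<le> t"
  proof -
    have "ln 2 \<le> ln (2 * n)" using n1 by simp
    then show ?thesis using ln2_ge by (simp add: t_def)
  qed
  have et: "4 * exp (- t / 2) = 2 / n"
  proof -
    have "- t / 2 = - ln (2 * n)" by (simp add: t_def)
    then have "exp (- t / 2) = inverse (exp (ln (2 * n)))" by (simp only: exp_minus)
    also have "\<dots> = inverse (2 * n)" using n1 by simp
    finally show ?thesis using n1 by (simp add: field_simps)
  qed
  define \<sigma> where "\<sigma> = (\<lambda>i. sqrt (\<Sigma> $ i $ i))"
  have \<sigma>0: "0 \<le> \<sigma> i" for i by (simp add: \<sigma>_def gauss_diag_nonneg[OF G])
  define A where "A = (LINT \<omega>|M. (\<sigma> (f (r \<omega>)))\<^sup>2)"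

  have meas_sel: "(\<lambda>\<omega>. F (f (r \<omega>)) \<omega>) \<in> borel_measurable M" if "\<And>j. F j \<in> borel_measurable M"
    for F :: "'n \<Rightarrow> 'a \<Rightarrow> real"
    by (rule measurable_compose_countable'[OF _ xm]) (auto intro: that)
  have int_sel: "integrable M (\<lambda>\<omega>. F (f (r \<omega>)) \<omega>)" if iF: "\<And>j. integrable M (F j)"
    for F :: "'n \<Rightarrow> 'a \<Rightarrow> real"
  proof -
    have iS: "integrable M (\<lambda>\<omega>. \<Sum>j\<in>UNIV. \<bar>F j \<omega>\<bar>)"
    proof (rule Bochner_Integration.integrable_sum)
      fix j show "integrable M (\<lambda>\<omega>. \<bar>F j \<omega>\<bar>)" by (rule integrable_abs[OF iF])
    qed
    have mF: "(\<lambda>\<omega>. F (f (r \<omega>)) \<omega>) \<in> borel_measurable M"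
      by (rule meas_sel) (rule borel_measurable_integrable[OF iF])
    have bd: "AE \<omega> in M. norm (F (f (r \<omega>)) \<omega>) \<le> norm (\<Sum>j\<in>UNIV. \<bar>F j \<omega>\<bar>)"
    proof (rule AE_I2)
      fix \<omega>
      have "\<bar>F (f (r \<omega>)) \<omega>\<bar> \<le> (\<Sum>j\<in>UNIV. \<bar>F j \<omega>\<bar>)"
        by (rule member_le_sum[where f="\<lambda>j. \<bar>F j \<omega>\<bar>"]) auto
      then show "norm (F (f (r \<omega>)) \<omega>) \<le> norm (\<Sum>j\<in>UNIV. \<bar>F j \<omega>\<bar>)"
        by (simp add: sum_nonneg)
    qed
    show ?thesis by (rule Bochner_Integration.integrable_bound[OF iS mF bd])
  qed
  have intA: "integrable M (\<lambda>\<omega>. (\<sigma> (f (r \<omega>)))\<^sup>2)"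
    by (rule int_sel[of "\<lambda>j \<omega>. (\<sigma> j)\<^sup>2"]) simp
  have A0: "0 \<le> A" unfolding A_def by simp

  define d where "d = (\<lambda>j \<omega>. r \<omega> $ j - \<mu> $ j)"
  define g where "g = (\<lambda>j \<omega>. if 0 < \<sigma> j then d j \<omega> / \<sigma> j else 0)"
  define h where "h = (\<lambda>j \<omega>. max 0 ((g j \<omega>)\<^sup>2 - t))"
  define z where "z = (\<lambda>j \<omega>. if \<sigma> j = 0 then \<bar>d j \<omega>\<bar> else 0)"
  have h_nn: "0 \<le> h j \<omega>" for j \<omega> by (simp add: h_def)
  have z_nn: "0 \<le> z j \<omega>" for j \<omega> by (simp add: z_def)
  have int_d: "integrable M (\<lambda>\<omega>. \<bar>d j \<omega>\<bar>)" for j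
    unfolding d_def by (rule coord_abs(1)[OF P G])
  have hz: "integrable M (h j) \<and> (LINT \<omega>|M. h j \<omega>) \<le> 2 / n" for j
  proof (cases "0 < \<sigma> j")
    case True
    then have "h j = (\<lambda>\<omega>. max 0 (((r \<omega> $ j - \<mu> $ j) / sqrt (\<Sigma>$j$j))\<^sup>2 - t))"
      by (simp add: h_def g_def d_def \<sigma>_def)
    then show ?thesis using coord_tail[OF P G _ t1, of j] True et by (simp add: \<sigma>_def)
  next
    case False
    then have "h j = (\<lambda>\<omega>. 0)" using t1 by (simp add: h_def g_def fun_eq_iff)
    then show ?thesis using n1 by simp
  qed
  have int_h: "integrable M (h j)" for j using hz by blast
  have Eh: "(LINT \<omega>|M. h j \<omega>) \<le> 2 / n" for j using hz by blast
  have zz: "integrable M (z j) \<and> (LINT \<omega>|M. z j \<omega>) = 0" for j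
  proof (cases "\<sigma> j = 0")
    case True
    then have "z j = (\<lambda>\<omega>. \<bar>r \<omega> $ j - \<mu> $ j\<bar>)" by (simp add: z_def d_def)
    moreover have "\<Sigma>$j$j = 0" using True by (simp add: \<sigma>_def)
    ultimately show ?thesis using coord_abs[OF P G, of j] by simp
  next
    case False
    then show ?thesis by (simp add: z_def)
  qed
  have int_z: "integrable M (z j)" for j using zz by blast
  have Ez: "(LINT \<omega>|M. z j \<omega>) = 0" for j using zz by blast

  have pw1: "\<bar>d (f (r \<omega>)) \<omega>\<bar> \<le> a / 2 * (\<sigma> (f (r \<omega>)))\<^sup>2 + t / (2 * a) + 1 / (2 * a) * (\<Sum>j\<in>UNIV. h j \<omega>) + (\<Sum>j\<in>UNIV. z j \<omega>)"
    if a: "0 < a" for a \<omega>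
  proof -
    define k where "k = f (r \<omega>)"
    have Hk: "h k \<omega> \<le> (\<Sum>j\<in>UNIV. h j \<omega>)" by (rule member_le_sum) (auto simp: h_nn)
    have Zk: "z k \<omega> \<le> (\<Sum>j\<in>UNIV. z j \<omega>)" by (rule member_le_sum) (auto simp: z_nn)
    have Hs: "0 \<le> (\<Sum>j\<in>UNIV. h j \<omega>)" by (rule sum_nonneg) (simp add: h_nn)
    have Zs: "0 \<le> (\<Sum>j\<in>UNIV. z j \<omega>)" by (rule sum_nonneg) (simp add: z_nn)
    have "\<bar>d k \<omega>\<bar> \<le> a / 2 * (\<sigma> k)\<^sup>2 + t / (2 * a) + 1 / (2 * a) * (\<Sum>j\<in>UNIV. h j \<omega>) + (\<Sum>j\<in>UNIV. z j \<omega>)"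
    proof (cases "0 < \<sigma> k")
      case True
      have e: "\<bar>d k \<omega>\<bar> = \<sigma> k * \<bar>g k \<omega>\<bar>" using True by (simp add: g_def abs_divide)
      have "\<sigma> k * \<bar>g k \<omega>\<bar> \<le> a / 2 * (\<sigma> k)\<^sup>2 + \<bar>g k \<omega>\<bar>\<^sup>2 / (2 * a)" by (rule amgm2[OF a])
      also have "\<bar>g k \<omega>\<bar>\<^sup>2 \<le> t + (\<Sum>j\<in>UNIV. h j \<omega>)" using Hk by (simp add: h_def)
      then have "\<bar>g k \<omega>\<bar>\<^sup>2 / (2 * a) \<le> (t + (\<Sum>j\<in>UNIV. h j \<omega>)) / (2 * a)" using a by (simp add: divide_right_mono)
      finally show ?thesis using e Zs by (simp add: add_divide_distrib)
    next
      case False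
      then have "\<sigma> k = 0" using \<sigma>0[of k] by simp
      then have "\<bar>d k \<omega>\<bar> = z k \<omega>" by (simp add: z_def)
      moreover have "0 \<le> a / 2 * (\<sigma> k)\<^sup>2 + t / (2 * a) + 1 / (2 * a) * (\<Sum>j\<in>UNIV. h j \<omega>)"
        using a t1 Hs by simp
      ultimately show ?thesis using Zk by linarith
    qed
    then show ?thesis by (simp add: k_def)
  qed

  have int_H: "integrable M (\<lambda>\<omega>. \<Sum>j\<in>UNIV. h j \<omega>)"
    by (rule Bochner_Integration.integrable_sum) (rule int_h)
  have int_Z: "integrable M (\<lambda>\<omega>. \<Sum>j\<in>UNIV. z j \<omega>)"
    by (rule Bochner_Integration.integrable_sum) (rule int_z)
  have int_dx: "integrable M (\<lambda>\<omega>. \<bar>d (f (r \<omega>)) \<omega>\<bar>)"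
    by (rule int_sel[of "\<lambda>j \<omega>. \<bar>d j \<omega>\<bar>"]) (rule int_d)
  have EH: "(LINT \<omega>|M. (\<Sum>j\<in>UNIV. h j \<omega>)) \<le> 2"
  proof -
    have "(LINT \<omega>|M. (\<Sum>j\<in>UNIV. h j \<omega>)) = (\<Sum>j\<in>UNIV. LINT \<omega>|M. h j \<omega>)"
      by (rule Bochner_Integration.integral_sum) (rule int_h)
    also have "\<dots> \<le> (\<Sum>j\<in>(UNIV::'n set). 2 / n)" by (rule sum_mono) (rule Eh)
    also have "\<dots> = 2" using n1 by (simp add: n_def)
    finally show ?thesis .
  qed
  have EZ: "(LINT \<omega>|M. (\<Sum>j\<in>UNIV. z j \<omega>)) = 0"
  proof -
    have "(LINT \<omega>|M. (\<Sum>j\<in>UNIV. z j \<omega>)) = (\<Sum>j\<in>UNIV. LINT \<omega>|M. z j \<omega>)"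
      by (rule Bochner_Integration.integral_sum) (rule int_z)
    also have "\<dots> = 0" by (simp add: Ez)
    finally show ?thesis .
  qed
  have P1a: "(LINT \<omega>|M. \<bar>d (f (r \<omega>)) \<omega>\<bar>) \<le> (a * A + (t + 2) / a) / 2" if a: "0 < a" for a
  proof -
    let ?R = "\<lambda>\<omega>. a / 2 * (\<sigma> (f (r \<omega>)))\<^sup>2 + t / (2 * a) + 1 / (2 * a) * (\<Sum>j\<in>UNIV. h j \<omega>) + (\<Sum>j\<in>UNIV. z j \<omega>)"
    have iR: "integrable M ?R"
      using intA int_H int_Z by auto
    have "(LINT \<omega>|M. \<bar>d (f (r \<omega>)) \<omega>\<bar>) \<le> (LINT \<omega>|M. ?R \<omega>)"
      by (rule integral_mono[OF int_dx iR pw1[OF a]])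
    also have "(LINT \<omega>|M. ?R \<omega>) = a / 2 * A + t / (2 * a) + 1 / (2 * a) * (LINT \<omega>|M. (\<Sum>j\<in>UNIV. h j \<omega>)) + (LINT \<omega>|M. (\<Sum>j\<in>UNIV. z j \<omega>))"
      using intA int_H int_Z by (simp add: A_def prob_space)
    also have "\<dots> \<le> a / 2 * A + t / (2 * a) + 1 / (2 * a) * 2 + 0"
    proof -
      have "1 / (2 * a) * (LINT \<omega>|M. (\<Sum>j\<in>UNIV. h j \<omega>)) \<le> 1 / (2 * a) * 2"
        by (rule mult_left_mono[OF EH]) (use a in simp)
      then show ?thesis using EZ by linarith
    qed
    also have "\<dots> = (a * A + (t + 2) / a) / 2" using a by (simp add: field_simps)
    finally show ?thesis .
  qed
  have t2: "0 \<le> t + 2" using t1 by simp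
  have P1: "(LINT \<omega>|M. \<bar>d (f (r \<omega>)) \<omega>\<bar>) \<le> sqrt (A * (t + 2))"
    by (rule amgm_bound[OF A0 t2 P1a])

  define d' where "d' = (\<lambda>j \<omega>. r' \<omega> $ j - \<mu> $ j)"
  define g' where "g' = (\<lambda>j \<omega>. if 0 < \<sigma> j then d' j \<omega> / \<sigma> j else 0)"
  define z' where "z' = (\<lambda>j \<omega>. if \<sigma> j = 0 then \<bar>d' j \<omega>\<bar> else 0)"
  define I where "I = (\<lambda>j \<omega>. if f (r \<omega>) = j then 1 else (0::real))"
  have z'_nn: "0 \<le> z' j \<omega>" for j \<omega> by (simp add: z'_def)
  have I_nn: "0 \<le> I j \<omega>" for j \<omega> by (simp add: I_def)
  have int_d': "integrable M (\<lambda>\<omega>. \<bar>d' j \<omega>\<bar>)" for j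
    unfolding d'_def by (rule coord_abs(1)[OF P G'])
  have zz': "integrable M (z' j) \<and> (LINT \<omega>|M. z' j \<omega>) = 0" for j
  proof (cases "\<sigma> j = 0")
    case True
    then have "z' j = (\<lambda>\<omega>. \<bar>r' \<omega> $ j - \<mu> $ j\<bar>)" by (simp add: z'_def d'_def)
    moreover have "\<Sigma>$j$j = 0" using True by (simp add: \<sigma>_def)
    ultimately show ?thesis using coord_abs[OF P G', of j] by simp
  next
    case False
    then show ?thesis by (simp add: z'_def)
  qed
  have int_z': "integrable M (z' j)" for j using zz' by blast
  have Ez': "(LINT \<omega>|M. z' j \<omega>) = 0" for j using zz' by blast
  have gg: "integrable M (\<lambda>\<omega>. (g' j \<omega>)\<^sup>2) \<and> (LINT \<omega>|M. (g' j \<omega>)\<^sup>2) \<le> 1" for j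
  proof (cases "0 < \<sigma> j")
    case True
    then have "(\<lambda>\<omega>. (g' j \<omega>)\<^sup>2) = (\<lambda>\<omega>. ((r' \<omega> $ j - \<mu> $ j) / sqrt (\<Sigma>$j$j))\<^sup>2)"
      by (simp add: g'_def d'_def \<sigma>_def)
    then show ?thesis using coord_sq[OF P G', of j] True by (simp add: \<sigma>_def)
  next
    case False
    then have "(\<lambda>\<omega>. (g' j \<omega>)\<^sup>2) = (\<lambda>\<omega>. 0)" by (simp add: g'_def fun_eq_iff)
    then show ?thesis by simp
  qed
  have int_g': "integrable M (\<lambda>\<omega>. (g' j \<omega>)\<^sup>2)" for j using gg by blast
  have Eg': "(LINT \<omega>|M. (g' j \<omega>)\<^sup>2) \<le> 1" for j using gg by blast
  have mI: "I j \<in> borel_measurable M" for j unfolding I_def by measurable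
  have int_I: "integrable M (I j)" for j
  proof (rule Bochner_Integration.integrable_bound[OF _ mI])
    show "integrable M (\<lambda>_. 1::real)" by simp
    show "AE \<omega> in M. norm (I j \<omega>) \<le> norm (1::real)" by (rule AE_I2) (simp add: I_def)
  qed
  have ind: "indep_var borel (I j) borel (\<lambda>\<omega>. (g' j \<omega>)\<^sup>2)" for j
  proof -
    have m1: "(\<lambda>v. if f v = j then 1 else (0::real)) \<in> borel_measurable borel" by measurable
    have m2: "(\<lambda>v::real^'n. (if 0 < \<sigma> j then (v $ j - \<mu> $ j) / \<sigma> j else 0)\<^sup>2) \<in> borel_measurable borel"
      by measurable
    have "indep_var borel ((\<lambda>v. if f v = j then 1 else (0::real)) \<circ> r) borel
       ((\<lambda>v::real^'n. (if 0 < \<sigma> j then (v $ j - \<mu> $ j) / \<sigma> j else 0)\<^sup>2) \<circ> r')"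
      by (rule indep_var_compose[OF assms(4) m1 m2])
    moreover have "(\<lambda>v. if f v = j then 1 else (0::real)) \<circ> r = I j" by (simp add: I_def fun_eq_iff)
    moreover have "(\<lambda>v::real^'n. (if 0 < \<sigma> j then (v $ j - \<mu> $ j) / \<sigma> j else 0)\<^sup>2) \<circ> r' = (\<lambda>\<omega>. (g' j \<omega>)\<^sup>2)"
      by (simp add: g'_def d'_def fun_eq_iff)
    ultimately show ?thesis by simp
  qed
  have EIg: "(LINT \<omega>|M. I j \<omega> * (g' j \<omega>)\<^sup>2) \<le> (LINT \<omega>|M. I j \<omega>)" for j
  proof -
    have "(LINT \<omega>|M. I j \<omega> * (g' j \<omega>)\<^sup>2) = (LINT \<omega>|M. I j \<omega>) * (LINT \<omega>|M. (g' j \<omega>)\<^sup>2)"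
      by (rule indep_var_lebesgue_integral[OF ind int_I int_g'])
    also have "\<dots> \<le> (LINT \<omega>|M. I j \<omega>) * 1"
      by (rule mult_left_mono[OF Eg']) (simp add: I_nn)
    finally show ?thesis by simp
  qed
  have int_Ig: "integrable M (\<lambda>\<omega>. I j \<omega> * (g' j \<omega>)\<^sup>2)" for j
    by (rule indep_var_integrable[OF ind int_I int_g'])
  have int_GG: "integrable M (\<lambda>\<omega>. (\<Sum>j\<in>UNIV. I j \<omega> * (g' j \<omega>)\<^sup>2))"
    by (rule Bochner_Integration.integrable_sum) (rule int_Ig)
  have int_Z': "integrable M (\<lambda>\<omega>. (\<Sum>j\<in>UNIV. z' j \<omega>))"
    by (rule Bochner_Integration.integrable_sum) (rule int_z')
  have EGG: "(LINT \<omega>|M. (\<Sum>j\<in>UNIV. I j \<omega> * (g' j \<omega>)\<^sup>2)) \<le> 1"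
  proof -
    have "(LINT \<omega>|M. (\<Sum>j\<in>UNIV. I j \<omega> * (g' j \<omega>)\<^sup>2)) = (\<Sum>j\<in>UNIV. LINT \<omega>|M. I j \<omega> * (g' j \<omega>)\<^sup>2)"
      by (rule Bochner_Integration.integral_sum) (rule int_Ig)
    also have "\<dots> \<le> (\<Sum>j\<in>UNIV. LINT \<omega>|M. I j \<omega>)" by (rule sum_mono) (rule EIg)
    also have "\<dots> = (LINT \<omega>|M. (\<Sum>j\<in>UNIV. I j \<omega>))"
      by (rule Bochner_Integration.integral_sum[symmetric]) (rule int_I)
    also have "(\<lambda>\<omega>. (\<Sum>j\<in>UNIV. I j \<omega>)) = (\<lambda>\<omega>. 1)" by (simp add: I_def fun_eq_iff)
    also have "(LINT \<omega>|M. (1::real)) = 1" by (simp add: prob_space)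
    finally show ?thesis by simp
  qed
  have EZ': "(LINT \<omega>|M. (\<Sum>j\<in>UNIV. z' j \<omega>)) = 0"
  proof -
    have "(LINT \<omega>|M. (\<Sum>j\<in>UNIV. z' j \<omega>)) = (\<Sum>j\<in>UNIV. LINT \<omega>|M. z' j \<omega>)"
      by (rule Bochner_Integration.integral_sum) (rule int_z')
    also have "\<dots> = 0" by (simp add: Ez')
    finally show ?thesis .
  qed
  have pw2: "\<bar>d' (f (r \<omega>)) \<omega>\<bar> \<le> a / 2 * (\<sigma> (f (r \<omega>)))\<^sup>2 + 1 / (2 * a) * (\<Sum>j\<in>UNIV. I j \<omega> * (g' j \<omega>)\<^sup>2) + (\<Sum>j\<in>UNIV. z' j \<omega>)"
    if a: "0 < a" for a \<omega>
  proof -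
    define k where "k = f (r \<omega>)"
    have GGk: "(\<Sum>j\<in>UNIV. I j \<omega> * (g' j \<omega>)\<^sup>2) = (g' k \<omega>)\<^sup>2"
    proof -
      have "\<And>j. I j \<omega> * (g' j \<omega>)\<^sup>2 = (if k = j then (g' j \<omega>)\<^sup>2 else 0)" by (simp add: I_def k_def)
      then show ?thesis by (simp add: sum.delta)
    qed
    have Zk: "z' k \<omega> \<le> (\<Sum>j\<in>UNIV. z' j \<omega>)" by (rule member_le_sum) (auto simp: z'_nn)
    have Zs: "0 \<le> (\<Sum>j\<in>UNIV. z' j \<omega>)" by (rule sum_nonneg) (simp add: z'_nn)
    have "\<bar>d' k \<omega>\<bar> \<le> a / 2 * (\<sigma> k)\<^sup>2 + 1 / (2 * a) * (g' k \<omega>)\<^sup>2 + (\<Sum>j\<in>UNIV. z' j \<omega>)"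
    proof (cases "0 < \<sigma> k")
      case True
      have e: "\<bar>d' k \<omega>\<bar> = \<sigma> k * \<bar>g' k \<omega>\<bar>" using True by (simp add: g'_def abs_divide)
      have "\<sigma> k * \<bar>g' k \<omega>\<bar> \<le> a / 2 * (\<sigma> k)\<^sup>2 + \<bar>g' k \<omega>\<bar>\<^sup>2 / (2 * a)" by (rule amgm2[OF a])
      then show ?thesis using e Zs by simp
    next
      case False
      then have "\<sigma> k = 0" using \<sigma>0[of k] by simp
      then have "\<bar>d' k \<omega>\<bar> = z' k \<omega>" by (simp add: z'_def)
      moreover have "0 \<le> a / 2 * (\<sigma> k)\<^sup>2 + 1 / (2 * a) * (g' k \<omega>)\<^sup>2"
        using a by simp
      ultimately show ?thesis using Zk by linarith
    qed
    then show ?thesis using GGk by (simp add: k_def)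
  qed
  have int_dx': "integrable M (\<lambda>\<omega>. \<bar>d' (f (r \<omega>)) \<omega>\<bar>)"
    by (rule int_sel[of "\<lambda>j \<omega>. \<bar>d' j \<omega>\<bar>"]) (rule int_d')
  have P2a: "(LINT \<omega>|M. \<bar>d' (f (r \<omega>)) \<omega>\<bar>) \<le> (a * A + 1 / a) / 2" if a: "0 < a" for a
  proof -
    let ?R = "\<lambda>\<omega>. a / 2 * (\<sigma> (f (r \<omega>)))\<^sup>2 + 1 / (2 * a) * (\<Sum>j\<in>UNIV. I j \<omega> * (g' j \<omega>)\<^sup>2) + (\<Sum>j\<in>UNIV. z' j \<omega>)"
    have iR: "integrable M ?R"
      using intA int_GG int_Z' by auto
    have "(LINT \<omega>|M. \<bar>d' (f (r \<omega>)) \<omega>\<bar>) \<le> (LINT \<omega>|M. ?R \<omega>)"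
      by (rule integral_mono[OF int_dx' iR pw2[OF a]])
    also have "(LINT \<omega>|M. ?R \<omega>) = a / 2 * A + 1 / (2 * a) * (LINT \<omega>|M. (\<Sum>j\<in>UNIV. I j \<omega> * (g' j \<omega>)\<^sup>2)) + (LINT \<omega>|M. (\<Sum>j\<in>UNIV. z' j \<omega>))"
      using intA int_GG int_Z' by (simp add: A_def)
    also have "\<dots> \<le> a / 2 * A + 1 / (2 * a) * 1 + 0"
    proof -
      have "1 / (2 * a) * (LINT \<omega>|M. (\<Sum>j\<in>UNIV. I j \<omega> * (g' j \<omega>)\<^sup>2)) \<le> 1 / (2 * a) * 1"
        by (rule mult_left_mono[OF EGG]) (use a in simp)
      then show ?thesis using EZ' by linarith
    qed
    also have "\<dots> = (a * A + 1 / a) / 2" using a by (simp add: field_simps)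
    finally show ?thesis .
  qed
  have P2: "(LINT \<omega>|M. \<bar>d' (f (r \<omega>)) \<omega>\<bar>) \<le> sqrt (A * 1)"
    by (rule amgm_bound[OF A0 _ P2a]) simp_all

  have pt3: "\<bar>r \<omega> $ k - r' \<omega> $ k\<bar> \<le> \<bar>d k \<omega>\<bar> + \<bar>d' k \<omega>\<bar>" for k \<omega>
    unfolding d_def d'_def by arith
  have int_dd: "integrable M (\<lambda>\<omega>. \<bar>d (f (r \<omega>)) \<omega>\<bar> + \<bar>d' (f (r \<omega>)) \<omega>\<bar>)"
    using int_dx int_dx' by simp
  have mdiff: "(\<lambda>\<omega>. \<bar>r \<omega> $ f (r \<omega>) - r' \<omega> $ f (r \<omega>)\<bar>) \<in> borel_measurable M"
    by (rule meas_sel[of "\<lambda>j \<omega>. \<bar>r \<omega> $ j - r' \<omega> $ j\<bar>"]) measurable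
  have int_diff: "integrable M (\<lambda>\<omega>. \<bar>r \<omega> $ f (r \<omega>) - r' \<omega> $ f (r \<omega>)\<bar>)"
  proof (rule Bochner_Integration.integrable_bound[OF int_dd mdiff])
    show "AE \<omega> in M. norm \<bar>r \<omega> $ f (r \<omega>) - r' \<omega> $ f (r \<omega>)\<bar> \<le> norm (\<bar>d (f (r \<omega>)) \<omega>\<bar> + \<bar>d' (f (r \<omega>)) \<omega>\<bar>)"
      by (rule AE_I2) (use pt3 in simp)
  qed
  have "(LINT \<omega>|M. \<bar>r \<omega> $ f (r \<omega>) - r' \<omega> $ f (r \<omega>)\<bar>) \<le> (LINT \<omega>|M. \<bar>d (f (r \<omega>)) \<omega>\<bar> + \<bar>d' (f (r \<omega>)) \<omega>\<bar>)"
    by (rule integral_mono[OF int_diff int_dd]) (rule pt3)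
  also have "\<dots> = (LINT \<omega>|M. \<bar>d (f (r \<omega>)) \<omega>\<bar>) + (LINT \<omega>|M. \<bar>d' (f (r \<omega>)) \<omega>\<bar>)"
    by (rule Bochner_Integration.integral_add[OF int_dx int_dx'])
  also have "\<dots> \<le> sqrt (A * (t + 2)) + sqrt (A * 1)" using P1 P2 by linarith
  also have "\<dots> = (1 + sqrt (t + 2)) * sqrt A" by (simp only: real_sqrt_mult mult_1_right) (simp add: algebra_simps)
  finally have C2: "(LINT \<omega>|M. \<bar>r \<omega> $ f (r \<omega>) - r' \<omega> $ f (r \<omega>)\<bar>) \<le> (1 + sqrt (t + 2)) * sqrt A" .
  have C1: "(LINT \<omega>|M. \<bar>r \<omega> $ f (r \<omega>) - \<mu> $ f (r \<omega>)\<bar>) \<le> sqrt (A * (t + 2))"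
    using P1 by (simp add: d_def)
  show ?thesis using C1 C2 unfolding A_def \<sigma>_def t_def n_def by simp
qed

end
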